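(* Let $W,V$ be subspaces of $\mathbb{R}^n$ with $\mathbb{R}^n=W\oplus V^\perp$, and let $\mu\in\mathcal{P}_2(W)$ be a probabilistic frame for $W$ with frame operator $\mathbf{S}_\mu$. A measurable map $T:W\to V$ is such that $T_\#\mu$ is an oblique dual probabilistic frame of $\mu$ on $V$ with respect to the coupling $(\mathbf{Id},T)_\#\mu$ if and only if there is a measurable map $h:W\to V$ with $h_\#\mu\in\mathcal{P}_2(V)$ and $\int_W\mathbf{x}\,h(\mathbf{x})^t\,d\mu(\mathbf{x})=\mathbf{0}_{n\times n}$ such that for all $\mathbf{x}\in W$, $$T(\mathbf{x})=\boldsymbol{\pi}_{VW^\perp}\mathbf{S}_\mu^\dagger\mathbf{x}+h(\mathbf{x}).$$
   Context: $\mathcal{P}_2(S)$ denotes Borel probability measures on $\mathbb{R}^n$ concentrated on the subspace $S$ with finite second moment. $\mu\in\mathcal{P}_2(W)$ is a probabilistic frame for $W$ if there exist $0<A\le B<\infty$ with $A\|\mathbf{x}\|^2\le\int_W|\langle\mathbf{x},\mathbf{y}\rangle|^2d\mu(\mathbf{y})\le B\|\mathbf{x}\|^2$ for all $\mathbf{x}\in W$; its frame operator is $\mathbf{S}_\mu=\int_W\mathbf{y}\mathbf{y}^td\mu(\mathbf{y})$, with Moore–Penrose inverse $\mathbf{S}_\mu^\dagger$. $(\mathbf{Id},T)_\#\mu$ is the pushforward of $\mu$ under $\mathbf{x}\mapsto(\mathbf{x},T(\mathbf{x}))$. $\boldsymbol{\pi}_{WV^\perp}$ is the oblique projection onto $W$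 along $V^\perp$ and $\boldsymbol{\pi}_{VW^\perp}$ the oblique projection onto $V$ along $W^\perp$. $\nu\in\mathcal{P}_2(V)$ is an oblique dual probabilistic frame of $\mu$ on $V$ with respect to a coupling $\gamma$ of $\mu$ and $\nu$ if $\int_{W\times V}\mathbf{x}\mathbf{y}^t\,d\gamma(\mathbf{x},\mathbf{y})=\boldsymbol{\pi}_{WV^\perp}$. *)

theory Defs
  imports "HOL-Analysis.Analysis" "HOL-Probability.Probability"
begin

definition outer :: "real^'n \<Rightarrow> real^'n \<Rightarrow> real^'n^'n" where
  "outer x y = (\<chi> i j. x $ i * y $ j)"

definition P2 :: "(real^'n) set \<Rightarrow> (real^'n) measure \<Rightarrow> bool" where
  "P2 S \<mu> \<longleftrightarrow> prob_space \<mu> \<and> sets \<mu> = sets borel \<and> S \<in> sets \<mu> \<and> emeasure \<mu> S = 1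
     \<and> integrable \<mu> (\<lambda>y. (norm y)\<^sup>2)"

definition prob_frame :: "(real^'n) set \<Rightarrow> (real^'n) measure \<Rightarrow> bool" where
  "prob_frame W \<mu> \<longleftrightarrow> P2 W \<mu> \<and>
     (\<exists>A B. 0 < A \<and> A \<le> B \<and> B < \<infinity> \<and>
        (\<forall>x\<in>W. A * (norm x)\<^sup>2 \<le> (\<integral>y. \<bar>x \<bullet> y\<bar>\<^sup>2 \<partial>\<mu>) \<and> (\<integral>y. \<bar>x \<bullet> y\<bar>\<^sup>2 \<partial>\<mu>) \<le> B * (norm x)\<^sup>2))"

definition frame_op :: "(real^'n) measure \<Rightarrow> real^'n^'n" where
  "frame_op \<mu> = (\<integral>y. outer y y \<partial>\<mu>)"

definition mp_pinv :: "real^'n^'n \<Rightarrow> real^'n^'n" where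
  "mp_pinv A = (THE B. A ** B ** A = A \<and> B ** A ** B = B \<and>
                  transpose (A ** B) = A ** B \<and> transpose (B ** A) = B ** A)"

text \<open>Oblique projection onto V along U (meaningful when R^n = V \<oplus> U).\<close>
definition oblique_proj :: "(real^'n) set \<Rightarrow> (real^'n) set \<Rightarrow> real^'n^'n" where
  "oblique_proj V U = (THE P. \<forall>x. P *v x \<in> V \<and> x - P *v x \<in> U)"

definition coupling :: "((real^'n) \<times> (real^'n)) measure \<Rightarrow> (real^'n) measure \<Rightarrow> (real^'n) measure \<Rightarrow> bool" where
  "coupling \<gamma> \<mu> \<nu> \<longleftrightarrow> prob_space \<gamma> \<and> sets \<gamma> = sets (borel \<Otimes>\<^sub>M borel) \<and>
     distr \<gamma> borel fst = \<mu> \<and> distr \<gamma> borel snd = \<nu>"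

definition oblique_dual ::
  "(real^'n) set \<Rightarrow> (real^'n) set \<Rightarrow> (real^'n) measure \<Rightarrow> (real^'n) measure
     \<Rightarrow> ((real^'n) \<times> (real^'n)) measure \<Rightarrow> bool" where
  "oblique_dual W V \<mu> \<nu> \<gamma> \<longleftrightarrow> P2 V \<nu> \<and> coupling \<gamma> \<mu> \<nu> \<and>
     (\<integral>p. outer (fst p) (snd p) \<partial>\<gamma>) = oblique_proj W (orthogonal_comp V)"

end

theory Submission
  imports Defs
begin

lemma outer_mulv: "outer x y *v v = (y \<bullet> v) *\<^sub>R x"
  by (simp add: vec_eq_iff outer_def matrix_vector_mult_def inner_vec_def sum_distrib_left mult.commute mult.left_commute)

lemma outer_row: "outer a b $ i = (a $ i) *\<^sub>R b"
  by (simp add: vec_eq_iff outer_def)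

lemma outer_mul_transpose: "outer x x ** transpose M = outer x (M *v x)"
  by (simp add: vec_eq_iff outer_def matrix_matrix_mult_def matrix_vector_mult_def transpose_def sum_distrib_left mult.commute mult.left_commute)

lemma outer_diff: "outer x (a - b) = outer x a - outer x b"
  by (simp add: vec_eq_iff outer_def algebra_simps)

lemma outer_add: "outer x (a + b) = outer x a + outer x b"
  by (simp add: vec_eq_iff outer_def algebra_simps)

lemma mat_eq_inner:
  fixes A B :: "real^'n^'m"
  assumes "\<And>u v. u \<bullet> (A *v v) = u \<bullet> (B *v v)"
  shows "A = B"
proof -
  have "A *v v = B *v v" for v
  proof -
    have "(A *v v - B *v v) \<bullet> (A *v v - B *v v) = 0"
      using assms[of "A *v v - B *v v" v] by (simp add: inner_diff_right)
    then show ?thesis by simp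
  qed
  then show ?thesis by (simp add: matrix_eq)
qed

lemma inner_transpose: "(u::real^'n) \<bullet> (transpose A *v v) = (A *v u) \<bullet> v"
  by (metis dot_lmul_matrix inner_commute transpose_matrix_vector)

lemma penrose_unique:
  fixes A B C :: "real^'n^'n"
  assumes b1: "A ** B ** A = A" and b2: "B ** A ** B = B" and b3: "transpose (A ** B) = A ** B"
    and b4: "transpose (B ** A) = B ** A"
    and c1: "A ** C ** A = A" and c2: "C ** A ** C = C" and c3: "transpose (A ** C) = A ** C"
    and c4: "transpose (C ** A) = C ** A"
  shows "B = C"
proof -
  have AB: "A ** B = A ** C"
  proof -
    have "A ** B = transpose B ** transpose A" using b3 by (metis matrix_transpose_mul)
    also have "\<dots> = transpose B ** transpose (A ** C ** A)" using c1 by simp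
    also have "\<dots> = transpose B ** (transpose A ** transpose C ** transpose A)"
      by (simp add: matrix_transpose_mul matrix_mul_assoc)
    also have "\<dots> = transpose (A ** B) ** transpose (A ** C)"
      by (simp add: matrix_transpose_mul matrix_mul_assoc)
    also have "\<dots> = (A ** B ** A) ** C" using b3 c3 by (simp add: matrix_mul_assoc)
    also have "\<dots> = A ** C" using b1 by simp
    finally show ?thesis .
  qed
  have BA: "B ** A = C ** A"
  proof -
    have "B ** A = transpose A ** transpose B" using b4 by (metis matrix_transpose_mul)
    also have "\<dots> = transpose (A ** C ** A) ** transpose B" using c1 by simp
    also have "\<dots> = (transpose A ** transpose C ** transpose A) ** transpose B"
      by (simp add: matrix_transpose_mul matrix_mul_assoc)
    also have "\<dots> = transpose (C ** A) ** transpose (B ** A)"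
      by (simp add: matrix_transpose_mul matrix_mul_assoc)
    also have "\<dots> = C ** (A ** B ** A)" using b4 c4 by (simp add: matrix_mul_assoc)
    also have "\<dots> = C ** A" using b1 by simp
    finally show ?thesis .
  qed
  have "B = B ** (A ** B)" using b2 by (simp add: matrix_mul_assoc)
  also have "\<dots> = (B ** A) ** C" using AB by (simp add: matrix_mul_assoc)
  also have "\<dots> = C ** A ** C" using BA by simp
  also have "\<dots> = C" using c2 .
  finally show ?thesis .
qed

lemma orth_proj_exists:
  fixes K :: "(real^'n) set"
  assumes "subspace K"
  shows "\<exists>Q::real^'n^'n. \<forall>x. Q *v x \<in> K \<and> x - Q *v x \<in> orthogonal_comp K"
proof -
  obtain B where "B \<subseteq> K"
    and ortho: "pairwise orthogonal B" "\<And>x. x \<in> B \<Longrightarrow> norm x = 1"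
    and "independent B" "card B = dim K" "span B = K"
    using orthonormal_basis_subspace [OF assms] by metis
  then have "finite B"
    by (simp add: indep_card_eq_dim_span)
  have *: "\<forall>x\<in>B. \<forall>y\<in>B. x \<bullet> y = (if x=y then 1 else 0)"
    using ortho norm_eq_1 by (auto simp: orthogonal_def pairwise_def)
  define f where "f v = (\<Sum>b\<in>B. (v \<bullet> b) *\<^sub>R b)" for v :: "real^'n"
  have lin: "linear f"
    unfolding f_def
    by (rule linearI) (simp_all add: inner_add_left scaleR_add_left sum.distrib scaleR_sum_right)
  have "f v \<in> K \<and> v - f v \<in> orthogonal_comp K" for v
  proof
    show "f v \<in> K"
      unfolding f_def by (metis (no_types, lifting) \<open>span B = K\<close> assms subspace_sum span_base span_mul)
    show "(v - f v) \<in> orthogonal_comp K"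
      unfolding orthogonal_comp_def orthogonal_def mem_Collect_eq
    proof
      fix y
      assume "y \<in> K"
      with \<open>span B = K\<close> span_finite [OF \<open>finite B\<close>]
      obtain u where u: "y = (\<Sum>b\<in>B. u b *\<^sub>R b)"
        by auto
      have "b \<bullet> (v - f v) = 0" if "b \<in> B" for b
        using that \<open>finite B\<close> unfolding f_def
        by (simp add: * algebra_simps inner_sum_right if_distrib [of "(*)v" for v] inner_commute cong: if_cong)
      then show "y \<bullet> (v - f v) = 0"
        by (simp add: u inner_sum_left)
    qed
  qed
  then have "\<forall>x. matrix f *v x \<in> K \<and> x - matrix f *v x \<in> orthogonal_comp K"
    using matrix_works[OF lin[folded linear_matrix_vector_mul_eq]] by simp
  then show ?thesis by blast
qed

lemma oblique_the:
  fixes A U :: "(real^'n) set"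
  assumes P0: "\<forall>x. P0 *v x \<in> A \<and> x - P0 *v x \<in> U" and AU: "A \<inter> U = {0}"
    and sA: "subspace A" and sU: "subspace U"
  shows "oblique_proj A U = P0"
  unfolding oblique_proj_def
proof (rule the_equality)
  show "\<forall>x. P0 *v x \<in> A \<and> x - P0 *v x \<in> U" by fact
  fix P assume P: "\<forall>x. P *v x \<in> A \<and> x - P *v x \<in> U"
  have "P *v x = P0 *v x" for x
  proof -
    have "P *v x - P0 *v x \<in> A" using P P0 sA by (simp add: subspace_diff)
    moreover have "(x - P0 *v x) - (x - P *v x) \<in> U" using P P0 sU subspace_diff by blast
    then have "P *v x - P0 *v x \<in> U" by simp
    ultimately have "P *v x - P0 *v x \<in> A \<inter> U" by blast
    then have "P *v x - P0 *v x = 0" using AU by simp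
    then show ?thesis by simp
  qed
  then show "P = P0" by (simp add: matrix_eq)
qed

lemma decomp_unique:
  fixes W U :: "(real^'n) set"
  assumes "W \<inter> U = {0}" "subspace W" "subspace U"
    and "w \<in> W" "x - w \<in> U" "w' \<in> W" "x - w' \<in> U"
  shows "w = w'"
proof -
  have "w - w' \<in> W" using assms by (simp add: subspace_diff)
  moreover have "(x - w') - (x - w) \<in> U" using assms subspace_diff by blast
  then have "w - w' \<in> U" by simp
  ultimately have "w - w' \<in> W \<inter> U" by blast
  then have "w - w' = 0" using assms(1) by simp
  then show ?thesis by simp
qed

lemma oblique_exists:
  fixes W U :: "(real^'n) set"
  assumes sW: "subspace W" and sU: "subspace U" and sum: "W + U = UNIV" and int: "W \<inter> U = {0}"
  shows "\<exists>R::real^'n^'n. \<forall>x. R *v x \<in> W \<and> x - R *v x \<in> U"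
proof -
  have ex: "\<exists>w. w \<in> W \<and> x - w \<in> U" for x
  proof -
    have "x \<in> W + U" using sum by simp
    then obtain a b where "a \<in> W" "b \<in> U" "x = a + b" by (meson set_plus_elim)
    then show ?thesis by (intro exI[of _ a]) auto
  qed
  define f where "f x = (SOME w. w \<in> W \<and> x - w \<in> U)" for x
  have f: "f x \<in> W \<and> x - f x \<in> U" for x
    unfolding f_def using someI_ex[OF ex[of x]] .
  have uq: "f x = w" if "w \<in> W" "x - w \<in> U" for x w
    using decomp_unique[OF int sW sU, of "f x" x w] f[of x] that by simp
  have lin: "linear f"
  proof (rule linearI)
    fix x y
    show "f (x + y) = f x + f y"
    proof (rule uq)
      show "f x + f y \<in> W" using f sW by (simp add: subspace_add)
      have "x + y - (f x + f y) = (x - f x) + (y - f y)" by simp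
      then show "x + y - (f x + f y) \<in> U" using f sU by (metis subspace_add)
    qed
  next
    fix c :: real and x
    show "f (c *\<^sub>R x) = c *\<^sub>R f x"
    proof (rule uq)
      show "c *\<^sub>R f x \<in> W" using f sW by (simp add: subspace_scale)
      have "c *\<^sub>R x - c *\<^sub>R f x = c *\<^sub>R (x - f x)" by (simp add: algebra_simps)
      then show "c *\<^sub>R x - c *\<^sub>R f x \<in> U" using f sU by (metis subspace_scale)
    qed
  qed
  then have "\<forall>x. matrix f *v x \<in> W \<and> x - matrix f *v x \<in> U"
    using matrix_works[OF lin[folded linear_matrix_vector_mul_eq]] f by simp
  then show ?thesis by blast
qed

lemma oblique_main:
  fixes W V :: "(real^'n) set"
  assumes sW: "subspace W" and sV: "subspace V"
    and sum: "W + orthogonal_comp V = UNIV" and int: "W \<inter> orthogonal_comp V = {0}"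
  shows "\<forall>x. oblique_proj W (orthogonal_comp V) *v x \<in> W \<and>
              x - oblique_proj W (orthogonal_comp V) *v x \<in> orthogonal_comp V"
    and "transpose (oblique_proj V (orthogonal_comp W)) = oblique_proj W (orthogonal_comp V)"
    and "\<forall>x. oblique_proj V (orthogonal_comp W) *v x \<in> V"
proof -
  have sVp: "subspace (orthogonal_comp V)" and sWp: "subspace (orthogonal_comp W)"
    by (simp_all add: subspace_orthogonal_comp)
  obtain R :: "real^'n^'n" where R: "\<forall>x. R *v x \<in> W \<and> x - R *v x \<in> orthogonal_comp V"
    using oblique_exists[OF sW sVp sum int] by blast
  have Req: "oblique_proj W (orthogonal_comp V) = R"
    by (rule oblique_the[OF R int sW sVp])
  then show "\<forall>x. oblique_proj W (orthogonal_comp V) *v x \<in> W \<and>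
              x - oblique_proj W (orthogonal_comp V) *v x \<in> orthogonal_comp V" using R by simp
  have R0: "R *v u = 0" if "u \<in> orthogonal_comp V" for u
  proof -
    have "R *v u \<in> W" using R by blast
    moreover have "u - (u - R *v u) \<in> orthogonal_comp V" using R that sVp subspace_diff by blast
    then have "R *v u \<in> orthogonal_comp V" by simp
    ultimately have "R *v u \<in> W \<inter> orthogonal_comp V" by blast
    then show ?thesis using int by simp
  qed
  have R1: "R *v w = w" if "w \<in> W" for w
    using decomp_unique[OF int sW sVp, of "R *v w" w w] R that sVp by (simp add: subspace_0)
  have VW: "V \<inter> orthogonal_comp W = {0}"
  proof -
    have "v = 0" if "v \<in> V" "v \<in> orthogonal_comp W" for v
    proof -
      have "v \<in> W + orthogonal_comp V" using sum by simp
      then obtain a b where ab: "a \<in> W" "b \<in> orthogonal_comp V" "v = a + b" by (meson set_plus_elim)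
      have "a \<bullet> v = 0" using that(2) ab(1) unfolding orthogonal_comp_def orthogonal_def by blast
      then have "v \<bullet> a = 0" by (simp only: inner_commute)
      moreover have "v \<bullet> b = 0" using that(1) ab(2) unfolding orthogonal_comp_def orthogonal_def by blast
      ultimately have "v \<bullet> v = 0" using ab by (simp add: inner_add_right)
      then show ?thesis by simp
    qed
    moreover have "0 \<in> V \<inter> orthogonal_comp W" using sV sWp by (simp add: subspace_0)
    ultimately show ?thesis by blast
  qed
  have T: "\<forall>x. transpose R *v x \<in> V \<and> x - transpose R *v x \<in> orthogonal_comp W"
  proof
    fix x
    have "transpose R *v x \<in> orthogonal_comp (orthogonal_comp V)"
    proof -
      have "orthogonal y (transpose R *v x)" if "y \<in> orthogonal_comp V" for y
      proof -
        have "R *v y = 0" using R0 that by blast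
        then show ?thesis unfolding orthogonal_def by (simp only: inner_transpose inner_zero_left)
      qed
      then show ?thesis unfolding orthogonal_comp_def[of "orthogonal_comp V"] by blast
    qed
    then have "transpose R *v x \<in> V" using orthogonal_comp_self[OF sV] by simp
    moreover have "x - transpose R *v x \<in> orthogonal_comp W"
    proof -
      have "orthogonal y (x - transpose R *v x)" if "y \<in> W" for y
      proof -
        have "R *v y = y" using R1 that by blast
        then have "y \<bullet> (transpose R *v x) = y \<bullet> x" by (simp only: inner_transpose)
        then show ?thesis unfolding orthogonal_def by (simp only: inner_diff_right)
      qed
      then show ?thesis unfolding orthogonal_comp_def[of W] by blast
    qed
    ultimately show "transpose R *v x \<in> V \<and> x - transpose R *v x \<in> orthogonal_comp W" by simp
  qed
  show "\<forall>x. oblique_proj V (orthogonal_comp W) *v x \<in> V"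
    unfolding oblique_the[OF T VW sV sWp] using T by blast
  show "transpose (oblique_proj V (orthogonal_comp W)) = oblique_proj W (orthogonal_comp V)"
    by (simp only: oblique_the[OF T VW sV sWp] Req transpose_transpose)
qed

lemma ker_subspace: "subspace {x. (S::real^'n^'m) *v x = 0}"
proof -
  have "linear ((*v) S)" using matrix_vector_mul_bounded_linear bounded_linear.linear by blast
  then show ?thesis by (simp add: subspace_def linear_add linear_scale)
qed

lemma pinv_sym:
  fixes S :: "real^'n^'n"
  assumes sym: "transpose S = S"
  shows "S ** mp_pinv S ** S = S \<and> mp_pinv S ** S ** mp_pinv S = mp_pinv S \<and>
         transpose (S ** mp_pinv S) = S ** mp_pinv S \<and> transpose (mp_pinv S ** S) = mp_pinv S ** S"
proof -
  define K where "K = {x. S *v x = 0}"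
  have sK: "subspace K" unfolding K_def by (rule ker_subspace)
  have sKp: "subspace (orthogonal_comp K)" by (rule subspace_orthogonal_comp)
  have KK: "K \<inter> orthogonal_comp K = {0}" by (rule orthogonal_Int_0[OF sK])
  obtain Q :: "real^'n^'n" where Q: "\<forall>x. Q *v x \<in> K \<and> x - Q *v x \<in> orthogonal_comp K"
    using orth_proj_exists[OF sK] by blast
  have Ssym: "u \<bullet> (S *v v) = (S *v u) \<bullet> v" for u v
    using inner_transpose[of u S v] sym by simp
  have SQ: "S *v (Q *v x) = 0" for x using Q unfolding K_def by blast
  have Qk: "Q *v k = k" if "k \<in> K" for k
    using decomp_unique[OF KK sK sKp, of "Q *v k" k k] Q that by (simp add: subspace_0[OF sKp])
  have Qperp: "Q *v y = 0" if "y \<in> orthogonal_comp K" for y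
  proof -
    have "Q *v y \<in> K" using Q by blast
    moreover have "y - (y - Q *v y) \<in> orthogonal_comp K" using Q that sKp subspace_diff by blast
    then have "Q *v y \<in> orthogonal_comp K" by simp
    ultimately have "Q *v y \<in> K \<inter> orthogonal_comp K" by blast
    then show ?thesis using KK by simp
  qed
  have orthK: "k \<bullet> y = 0" if "k \<in> K" "y \<in> orthogonal_comp K" for k y
    using that unfolding orthogonal_comp_def orthogonal_def by blast
  have Qsym: "u \<bullet> (Q *v v) = (Q *v u) \<bullet> v" for u v
  proof -
    have a: "(Q *v v) \<bullet> (u - Q *v u) = 0" using orthK Q by blast
    have b: "(Q *v u) \<bullet> (v - Q *v v) = 0" using orthK Q by blast
    have "u \<bullet> (Q *v v) = (Q *v u) \<bullet> (Q *v v)"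
      using a by (simp add: inner_diff_right inner_commute)
    also have "\<dots> = (Q *v u) \<bullet> v" using b by (simp add: inner_diff_right)
    finally show ?thesis .
  qed
  have QQ: "Q *v (Q *v x) = Q *v x" for x using Qk Q by blast
  have SperpK: "S *v x \<in> orthogonal_comp K" for x
  proof -
    have "orthogonal k (S *v x)" if "k \<in> K" for k
      using that Ssym[of k x] unfolding K_def orthogonal_def by simp
    then show ?thesis unfolding orthogonal_comp_def[of K] by blast
  qed
  have QS: "Q *v (S *v x) = 0" for x using Qperp SperpK by blast
  define G where "G = S + Q"
  have Gv: "G *v x = S *v x + Q *v x" for x unfolding G_def by (simp add: matrix_vector_mult_add_rdistrib)
  have inj: "\<forall>x. G *v x = 0 \<longrightarrow> x = 0"
  proof (intro allI impI)
    fix x assume "G *v x = 0"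
    then have e: "S *v x = - (Q *v x)" using Gv by (simp add: eq_neg_iff_add_eq_0)
    have "- (Q *v x) \<in> K" using Q sK subspace_neg by blast
    then have "S *v x \<in> K" using e by simp
    then have "S *v x \<in> K \<inter> orthogonal_comp K" using SperpK by blast
    then have "S *v x = 0" using KK by simp
    then have "x \<in> K" unfolding K_def by simp
    then have "Q *v x = x" using Qk by blast
    with e \<open>S *v x = 0\<close> show "x = 0" by simp
  qed
  obtain Bi where Bi: "Bi ** G = mat 1" using inj matrix_left_invertible_ker by blast
  then have Bi2: "G ** Bi = mat 1" using matrix_left_right_inverse by blast
  have BiG: "Bi *v (G *v x) = x" for x using Bi by (simp add: matrix_vector_mul_assoc)
  have GBi: "G *v (Bi *v x) = x" for x using Bi2 by (simp add: matrix_vector_mul_assoc)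
  have BiQ: "Bi *v (Q *v x) = Q *v x" for x
  proof -
    have "G *v (Q *v x) = Q *v x" using Gv SQ QQ by simp
    then show ?thesis using BiG by metis
  qed
  have QBi: "Q *v (Bi *v y) = Q *v y" for y
  proof -
    have "Q *v y = Q *v (G *v (Bi *v y))" using GBi by simp
    also have "\<dots> = Q *v (Bi *v y)" using Gv QS QQ by (simp add: matrix_vector_right_distrib)
    finally show ?thesis by simp
  qed
  define Bp where "Bp = Bi - Q"
  have Bpv: "Bp *v y = Bi *v y - Q *v y" for y unfolding Bp_def by (simp add: matrix_vector_mult_diff_rdistrib)
  have c1: "S *v (Bp *v y) = y - Q *v y" for y
  proof -
    have "S *v (Bp *v y) = S *v (Bi *v y)" using Bpv SQ by (simp add: matrix_vector_mult_diff_distrib)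
    also have "\<dots> = y - Q *v (Bi *v y)" using GBi[of y] Gv[of "Bi *v y"] by (simp add: algebra_simps)
    also have "\<dots> = y - Q *v y" using QBi by simp
    finally show ?thesis .
  qed
  have c2: "Bp *v (S *v x) = x - Q *v x" for x
  proof -
    have "Bp *v (S *v x) = Bi *v (S *v x)" using Bpv QS by simp
    also have "\<dots> = x - Bi *v (Q *v x)" using BiG[of x] Gv[of x] by (simp add: matrix_vector_right_distrib algebra_simps)
    also have "\<dots> = x - Q *v x" using BiQ by simp
    finally show ?thesis .
  qed
  have p1: "S ** Bp ** S = S"
    by (simp add: matrix_eq flip: matrix_vector_mul_assoc) (simp add: c2 matrix_vector_mult_diff_distrib SQ)
  have BpQ: "Bp *v (Q *v y) = 0" for y using Bpv BiQ QQ by simp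
  have p2: "Bp ** S ** Bp = Bp"
    by (simp add: matrix_eq flip: matrix_vector_mul_assoc) (simp add: c1 matrix_vector_mult_diff_distrib BpQ)
  have p3: "transpose (S ** Bp) = S ** Bp"
  proof (rule mat_eq_inner)
    fix u v
    have "u \<bullet> (transpose (S ** Bp) *v v) = ((S ** Bp) *v u) \<bullet> v" by (rule inner_transpose)
    also have "\<dots> = u \<bullet> v - (Q *v u) \<bullet> v" by (simp add: c1 flip: matrix_vector_mul_assoc) (simp add: inner_diff_left)
    also have "\<dots> = u \<bullet> ((S ** Bp) *v v)" by (simp add: c1 Qsym inner_diff_right flip: matrix_vector_mul_assoc)
    finally show "u \<bullet> (transpose (S ** Bp) *v v) = u \<bullet> ((S ** Bp) *v v)" .
  qed
  have p4: "transpose (Bp ** S) = Bp ** S"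
  proof (rule mat_eq_inner)
    fix u v
    have "u \<bullet> (transpose (Bp ** S) *v v) = ((Bp ** S) *v u) \<bullet> v" by (rule inner_transpose)
    also have "\<dots> = u \<bullet> v - (Q *v u) \<bullet> v" by (simp add: c2 flip: matrix_vector_mul_assoc) (simp add: inner_diff_left)
    also have "\<dots> = u \<bullet> ((Bp ** S) *v v)" by (simp add: c2 Qsym inner_diff_right flip: matrix_vector_mul_assoc)
    finally show "u \<bullet> (transpose (Bp ** S) *v v) = u \<bullet> ((Bp ** S) *v v)" .
  qed
  have "mp_pinv S = Bp"
    unfolding mp_pinv_def
  proof (rule the_equality)
    show "S ** Bp ** S = S \<and> Bp ** S ** Bp = Bp \<and> transpose (S ** Bp) = S ** Bp \<and> transpose (Bp ** S) = Bp ** S"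
      using p1 p2 p3 p4 by blast
    fix C assume "S ** C ** S = S \<and> C ** S ** C = C \<and> transpose (S ** C) = S ** C \<and> transpose (C ** S) = C ** S"
    then show "C = Bp" using penrose_unique[OF _ _ _ _ p1 p2 p3 p4, of C] by blast
  qed
  then show ?thesis using p1 p2 p3 p4 by simp
qed

lemma core:
  fixes W V :: "(real^'n) set" and S :: "real^'n^'n"
  assumes sW: "subspace W" and sV: "subspace V"
    and sum: "W + orthogonal_comp V = UNIV" and int: "W \<inter> orthogonal_comp V = {0}"
    and sym: "transpose S = S" and ker: "\<And>z. S *v z = 0 \<Longrightarrow> z \<in> orthogonal_comp W"
  shows "S ** transpose (oblique_proj V (orthogonal_comp W) ** mp_pinv S) = oblique_proj W (orthogonal_comp V)"
proof -
  define R where "R = oblique_proj W (orthogonal_comp V)"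
  define Sd where "Sd = mp_pinv S"
  define E where "E = Sd ** S"
  have pen: "S ** Sd ** S = S" "transpose (Sd ** S) = Sd ** S"
    using pinv_sym[OF sym] unfolding Sd_def by blast+
  have Rx: "R *v x \<in> W" for x using oblique_main(1)[OF sW sV sum int] unfolding R_def by blast
  have tP: "transpose (oblique_proj V (orthogonal_comp W)) = R"
    using oblique_main(2)[OF sW sV sum int] unfolding R_def .
  have Efix: "E *v w = w" if "w \<in> W" for w
  proof -
    have inK: "u - E *v u \<in> orthogonal_comp W" for u
    proof (rule ker)
      have "S *v (E *v u) = (S ** Sd ** S) *v u" unfolding E_def by (simp add: matrix_vector_mul_assoc matrix_mul_assoc)
      then show "S *v (u - E *v u) = 0" using pen by (simp add: matrix_vector_mult_diff_distrib)
    qed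
    have Esym: "u \<bullet> (E *v v) = (E *v u) \<bullet> v" for u v
      using inner_transpose[of u E v] pen(2) unfolding E_def by simp
    have "u \<bullet> (w - E *v w) = 0" for u
    proof -
      have "u \<bullet> (w - E *v w) = (u - E *v u) \<bullet> w" using Esym by (simp add: inner_diff_left inner_diff_right)
      also have "\<dots> = 0" using inK[of u] that unfolding orthogonal_comp_def orthogonal_def by (simp add: inner_commute)
      finally show ?thesis .
    qed
    from this[of "w - E *v w"] show ?thesis by simp
  qed
  have "S ** transpose (oblique_proj V (orthogonal_comp W) ** Sd) = (S ** transpose Sd) ** R"
    by (simp add: matrix_transpose_mul tP matrix_mul_assoc)
  also have "S ** transpose Sd = E"
    using pen(2) sym unfolding E_def by (metis matrix_transpose_mul)
  also have "E ** R = R"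
    by (simp add: matrix_eq flip: matrix_vector_mul_assoc) (simp add: Efix Rx)
  finally show ?thesis unfolding R_def Sd_def .
qed

lemma P2_facts:
  assumes "P2 W \<mu>"
  shows "prob_space \<mu>" "sets \<mu> = sets borel" "AE x in \<mu>. x \<in> W"
    "integrable \<mu> (\<lambda>y. (norm y)\<^sup>2)" "W \<in> sets \<mu>"
proof -
  show ps: "prob_space \<mu>" and "sets \<mu> = sets borel" and "integrable \<mu> (\<lambda>y. (norm y)\<^sup>2)"
    and Ws: "W \<in> sets \<mu>"
    using assms unfolding P2_def by auto
  have "emeasure \<mu> W = 1" using assms unfolding P2_def by auto
  then have "measure \<mu> W = 1" by (simp add: measure_def)
  then show "AE x in \<mu>. x \<in> W" using prob_space.AE_in_set_eq_1[OF ps Ws] by simp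
qed

lemma meas_cong:
  assumes "sets \<mu> = sets borel" "f \<in> borel_measurable borel"
  shows "f \<in> borel_measurable \<mu>"
  using assms measurable_cong_sets[OF assms(1) refl] by simp

lemma norm_outer_le: "norm (outer (a::real^'n) b) \<le> real CARD('n) * ((norm a)\<^sup>2 + (norm b)\<^sup>2)"
proof -
  have "norm (outer a b) \<le> (\<Sum>i\<in>UNIV. norm (outer a b $ i))"
    unfolding norm_vec_def by (rule L2_set_le_sum) simp
  also have "\<dots> = (\<Sum>i\<in>UNIV. \<bar>a $ i\<bar> * norm b)" by (simp add: outer_row)
  also have "\<dots> \<le> (\<Sum>i\<in>(UNIV::'n set). norm a * norm b)"
    by (rule sum_mono) (simp add: component_le_norm_cart mult_right_mono)
  also have "\<dots> = real CARD('n) * (norm a * norm b)" by simp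
  also have "\<dots> \<le> real CARD('n) * ((norm a)\<^sup>2 + (norm b)\<^sup>2)"
  proof (rule mult_left_mono)
    have "0 \<le> (norm a - norm b)\<^sup>2" by simp
    moreover have "0 \<le> norm a * norm b" by simp
    ultimately show "norm a * norm b \<le> (norm a)\<^sup>2 + (norm b)\<^sup>2"
      unfolding power2_diff by linarith
  qed simp
  finally show ?thesis .
qed

lemma outer_cont: "continuous_on UNIV (\<lambda>p::(real^'n) \<times> (real^'n). outer (fst p) (snd p))"
  unfolding outer_def
  by (intro continuous_on_vec_lambda continuous_intros)

lemma outer_meas:
  assumes "f \<in> borel_measurable M" "g \<in> borel_measurable M"
  shows "(\<lambda>x. outer (f x) (g x) :: real^'n^'n) \<in> borel_measurable M"
  using borel_measurable_continuous_Pair[OF assms outer_cont] by simp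

lemma integrable_outer:
  fixes f g :: "'a \<Rightarrow> real^'n"
  assumes "f \<in> borel_measurable M" "g \<in> borel_measurable M"
    and "integrable M (\<lambda>x. (norm (f x))\<^sup>2)" "integrable M (\<lambda>x. (norm (g x))\<^sup>2)"
  shows "integrable M (\<lambda>x. outer (f x) (g x))"
proof (rule Bochner_Integration.integrable_bound)
  show "integrable M (\<lambda>x. real CARD('n) * ((norm (f x))\<^sup>2 + (norm (g x))\<^sup>2))"
    using assms by (intro integrable_mult_right Bochner_Integration.integrable_add)
  show "(\<lambda>x. outer (f x) (g x)) \<in> borel_measurable M" by (rule outer_meas[OF assms(1,2)])
  show "AE x in M. norm (outer (f x) (g x)) \<le> norm (real CARD('n) * ((norm (f x))\<^sup>2 + (norm (g x))\<^sup>2))"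
  proof (intro AE_I2)
    fix x
    have "norm (outer (f x) (g x)) \<le> real CARD('n) * ((norm (f x))\<^sup>2 + (norm (g x))\<^sup>2)"
      by (rule norm_outer_le)
    also have "\<dots> = norm (real CARD('n) * ((norm (f x))\<^sup>2 + (norm (g x))\<^sup>2))"
      by (simp add: abs_of_nonneg)
    finally show "norm (outer (f x) (g x)) \<le> norm (real CARD('n) * ((norm (f x))\<^sup>2 + (norm (g x))\<^sup>2))" .
  qed
qed

lemma sq_bound:
  fixes a b :: "real^'n"
  shows "(norm (a + b))\<^sup>2 \<le> 2 * (norm a)\<^sup>2 + 2 * (norm b)\<^sup>2" "(norm (a - b))\<^sup>2 \<le> 2 * (norm a)\<^sup>2 + 2 * (norm b)\<^sup>2"
proof -
  have m: "(norm a + norm b)\<^sup>2 \<le> 2 * (norm a)\<^sup>2 + 2 * (norm b)\<^sup>2"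
    using zero_le_power2[of "norm a - norm b"] unfolding power2_diff power2_sum by linarith
  have "(norm (a + b))\<^sup>2 \<le> (norm a + norm b)\<^sup>2"
    by (rule power_mono[OF norm_triangle_ineq norm_ge_zero])
  then show "(norm (a + b))\<^sup>2 \<le> 2 * (norm a)\<^sup>2 + 2 * (norm b)\<^sup>2" using m by linarith
  have "(norm (a - b))\<^sup>2 \<le> (norm a + norm b)\<^sup>2"
    by (rule power_mono[OF norm_triangle_ineq4 norm_ge_zero])
  then show "(norm (a - b))\<^sup>2 \<le> 2 * (norm a)\<^sup>2 + 2 * (norm b)\<^sup>2" using m by linarith
qed

lemma integrable_sq_add:
  fixes f g :: "'a \<Rightarrow> real^'n"
  assumes fm: "f \<in> borel_measurable M" and gm: "g \<in> borel_measurable M"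
    and "integrable M (\<lambda>x. (norm (f x))\<^sup>2)" "integrable M (\<lambda>x. (norm (g x))\<^sup>2)"
  shows "integrable M (\<lambda>x. (norm (f x + g x))\<^sup>2)" "integrable M (\<lambda>x. (norm (f x - g x))\<^sup>2)"
proof -
  note [measurable] = fm gm
  have i: "integrable M (\<lambda>x. 2 * (norm (f x))\<^sup>2 + 2 * (norm (g x))\<^sup>2)"
    using assms by (intro integrable_mult_right Bochner_Integration.integrable_add)
  have nn: "norm (2 * (norm (a::real^'n))\<^sup>2 + 2 * (norm b)\<^sup>2) = 2 * (norm a)\<^sup>2 + 2 * (norm b)\<^sup>2" for a b
    by simp
  show "integrable M (\<lambda>x. (norm (f x + g x))\<^sup>2)"
  proof (rule Bochner_Integration.integrable_bound[OF i])
    show "(\<lambda>x. (norm (f x + g x))\<^sup>2) \<in> borel_measurable M"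
      using fm gm by measurable
    show "AE x in M. norm ((norm (f x + g x))\<^sup>2) \<le> norm (2 * (norm (f x))\<^sup>2 + 2 * (norm (g x))\<^sup>2)"
    proof (intro AE_I2)
      fix x
      show "norm ((norm (f x + g x))\<^sup>2) \<le> norm (2 * (norm (f x))\<^sup>2 + 2 * (norm (g x))\<^sup>2)"
        using sq_bound(1)[of "f x" "g x"] by (simp add: abs_of_nonneg)
    qed
  qed
  show "integrable M (\<lambda>x. (norm (f x - g x))\<^sup>2)"
  proof (rule Bochner_Integration.integrable_bound[OF i])
    show "(\<lambda>x. (norm (f x - g x))\<^sup>2) \<in> borel_measurable M"
      using fm gm by measurable
    show "AE x in M. norm ((norm (f x - g x))\<^sup>2) \<le> norm (2 * (norm (f x))\<^sup>2 + 2 * (norm (g x))\<^sup>2)"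
    proof (intro AE_I2)
      fix x
      show "norm ((norm (f x - g x))\<^sup>2) \<le> norm (2 * (norm (f x))\<^sup>2 + 2 * (norm (g x))\<^sup>2)"
        using sq_bound(2)[of "f x" "g x"] by (simp add: abs_of_nonneg)
    qed
  qed
qed

lemma mulv_meas: "(\<lambda>x. (A::real^'n^'m) *v x) \<in> borel_measurable borel"
  by (intro borel_measurable_continuous_onI linear_continuous_on matrix_vector_mul_bounded_linear)

lemma integrable_sq_lin:
  assumes "sets M = sets borel" "integrable M (\<lambda>x. (norm x)\<^sup>2)"
  shows "integrable M (\<lambda>x. (norm ((A::real^'n^'m) *v x))\<^sup>2)"
proof -
  obtain K where K: "K > 0" "\<And>x. norm (A *v x) \<le> norm x * K"
    using bounded_linear.pos_bounded[OF matrix_vector_mul_bounded_linear] by blast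
  have i: "integrable M (\<lambda>x. K\<^sup>2 * (norm x)\<^sup>2)" using assms by simp
  have [measurable]: "(\<lambda>x. A *v x) \<in> borel_measurable M" by (rule meas_cong[OF assms(1) mulv_meas])
  show ?thesis
  proof (rule Bochner_Integration.integrable_bound[OF i])
    show "(\<lambda>x. (norm (A *v x))\<^sup>2) \<in> borel_measurable M" by measurable
    have "(norm (A *v x))\<^sup>2 \<le> K\<^sup>2 * (norm x)\<^sup>2" for x
      using power_mono[OF K(2)[of x]] by (simp add: power_mult_distrib mult.commute)
    then show "AE x in M. norm ((norm (A *v x))\<^sup>2) \<le> norm (K\<^sup>2 * (norm x)\<^sup>2)"
      by (intro AE_I2) simp
  qed
qed

lemma bl_quad: "bounded_linear (\<lambda>A::real^'n^'n. u \<bullet> (A *v v))"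
proof -
  have "linear (\<lambda>A::real^'n^'n. u \<bullet> (A *v v))"
    by (rule linearI) (simp_all add: matrix_vector_mult_add_rdistrib inner_add_right
        flip: scaleR_matrix_vector_assoc)
  then show ?thesis by (simp add: linear_conv_bounded_linear)
qed

lemma bl_rmul: "bounded_linear (\<lambda>A::real^'n^'n. A ** B)"
proof -
  have "linear (\<lambda>A::real^'n^'n. A ** B)"
    by (rule linearI) (simp_all add: vec_eq_iff matrix_matrix_mult_def sum.distrib algebra_simps
        sum_distrib_left)
  then show ?thesis by (simp add: linear_conv_bounded_linear)
qed

lemma frame_facts:
  fixes W :: "(real^'n) set"
  assumes P2: "P2 W \<mu>"
  shows "integrable \<mu> (\<lambda>y. outer y y)"
    and "u \<bullet> (frame_op \<mu> *v v) = (\<integral>y. (u \<bullet> y) * (y \<bullet> v) \<partial>\<mu>)"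
    and "(\<integral>x. outer x (M *v x) \<partial>\<mu>) = frame_op \<mu> ** transpose M"
    and "transpose (frame_op \<mu>) = frame_op \<mu>"
proof -
  note F = P2_facts[OF P2]
  have idm: "(\<lambda>x. x) \<in> borel_measurable \<mu>" using F(2) by simp
  show I: "integrable \<mu> (\<lambda>y. outer y y)"
    by (rule integrable_outer[OF idm idm F(4) F(4)])
  show Q: "u \<bullet> (frame_op \<mu> *v v) = (\<integral>y. (u \<bullet> y) * (y \<bullet> v) \<partial>\<mu>)" for u v
  proof -
    have "u \<bullet> (frame_op \<mu> *v v) = (\<integral>y. (y \<bullet> v) * (u \<bullet> y) \<partial>\<mu>)"
      unfolding frame_op_def using integral_bounded_linear[OF bl_quad I, of u v] by (simp add: outer_mulv)
    then show ?thesis by (simp add: mult.commute)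
  qed
  show "(\<integral>x. outer x (M *v x) \<partial>\<mu>) = frame_op \<mu> ** transpose M"
    unfolding frame_op_def
    using integral_bounded_linear[OF bl_rmul I, of "transpose M"] by (simp add: outer_mul_transpose)
  show "transpose (frame_op \<mu>) = frame_op \<mu>"
  proof (rule mat_eq_inner)
    fix u v
    have "u \<bullet> (transpose (frame_op \<mu>) *v v) = v \<bullet> (frame_op \<mu> *v u)"
      by (simp only: inner_transpose inner_commute)
    also have "\<dots> = u \<bullet> (frame_op \<mu> *v v)"
      unfolding Q by (simp add: inner_commute mult.commute)
    finally show "u \<bullet> (transpose (frame_op \<mu>) *v v) = u \<bullet> (frame_op \<mu> *v v)" .
  qed
qed

lemma frame_ker:
  fixes W :: "(real^'n) set"
  assumes sW: "subspace W" and pf: "prob_frame W \<mu>"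
  shows "\<And>w'. w' \<in> orthogonal_comp W \<Longrightarrow> frame_op \<mu> *v w' = 0"
    and "\<And>z. frame_op \<mu> *v z = 0 \<Longrightarrow> z \<in> orthogonal_comp W"
proof -
  have P2: "P2 W \<mu>" using pf unfolding prob_frame_def by blast
  note F = P2_facts[OF P2]
  obtain A where A: "0 < A" "\<And>x. x \<in> W \<Longrightarrow> A * (norm x)\<^sup>2 \<le> (\<integral>y. \<bar>x \<bullet> y\<bar>\<^sup>2 \<partial>\<mu>)"
    using pf unfolding prob_frame_def by blast
  show Sperp: "frame_op \<mu> *v w' = 0" if w': "w' \<in> orthogonal_comp W" for w'
  proof -
    have "u \<bullet> (frame_op \<mu> *v w') = 0" for u
    proof -
      have "AE y in \<mu>. (u \<bullet> y) * (y \<bullet> w') = 0"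
        using F(3)
      proof eventually_elim
        case (elim y)
        then have "y \<bullet> w' = 0" using w' unfolding orthogonal_comp_def orthogonal_def by blast
        then show ?case by simp
      qed
      then have "(\<integral>y. (u \<bullet> y) * (y \<bullet> w') \<partial>\<mu>) = 0" by (rule integral_eq_zero_AE)
      then show ?thesis using frame_facts(2)[OF P2, of u w'] by simp
    qed
    from this[of "frame_op \<mu> *v w'"] show ?thesis by simp
  qed
  fix z assume z: "frame_op \<mu> *v z = 0"
  obtain y z' where y: "y \<in> span W" and z': "\<And>w. w \<in> span W \<Longrightarrow> orthogonal z' w" and zs: "z = y + z'"
    using orthogonal_subspace_decomp_exists[of W z] by blast
  have spW: "span W = W" using sW by (simp add: span_eq_iff)
  have z'W: "z' \<in> orthogonal_comp W"
    unfolding orthogonal_comp_def using z' spW orthogonal_commute by blast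
  have yW: "y \<in> W" using y spW by simp
  have Sy: "frame_op \<mu> *v y = 0"
  proof -
    have "y = z - z'" using zs by simp
    then show ?thesis using z Sperp[OF z'W] by (simp add: matrix_vector_mult_diff_distrib)
  qed
  have "(\<integral>t. \<bar>y \<bullet> t\<bar>\<^sup>2 \<partial>\<mu>) = (\<integral>t. (y \<bullet> t) * (t \<bullet> y) \<partial>\<mu>)"
    by (rule Bochner_Integration.integral_cong) (simp_all add: power2_eq_square inner_commute)
  also have "\<dots> = y \<bullet> (frame_op \<mu> *v y)" using frame_facts(2)[OF P2, of y y] by simp
  also have "\<dots> = 0" using Sy by simp
  finally have "A * (norm y)\<^sup>2 \<le> 0" using A(2)[OF yW] by simp
  then have "(norm y)\<^sup>2 \<le> 0" using A(1) by (simp add: mult_le_0_iff)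
  then have "y = 0" by simp
  then show "z \<in> orthogonal_comp W" using zs z'W by simp
qed

lemma distr_pair_int:
  assumes "sets \<mu> = sets borel" "T \<in> borel_measurable borel"
  shows "(\<integral>p. outer (fst p) (snd p) \<partial>(distr \<mu> (borel \<Otimes>\<^sub>M borel) (\<lambda>x. (x, T x))))
       = (\<integral>x. outer x (T x) \<partial>\<mu>)"
proof -
  have idm: "(\<lambda>x. x) \<in> borel_measurable \<mu>" using assms(1) by simp
  have Tm: "T \<in> borel_measurable \<mu>" by (rule meas_cong[OF assms])
  have m: "(\<lambda>x. (x, T x)) \<in> measurable \<mu> (borel \<Otimes>\<^sub>M borel)"
    by (rule measurable_Pair[OF idm Tm])
  have o: "(\<lambda>p. outer (fst p) (snd p) :: real^'a^'a) \<in> borel_measurable (borel \<Otimes>\<^sub>M borel)"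
    by (rule outer_meas[OF measurable_fst measurable_snd])
  show ?thesis using integral_distr[OF m o] by simp
qed

lemma P2_distr:
  fixes W V :: "(real^'n) set"
  assumes P2: "P2 W \<mu>" and sV: "subspace V" and fm: "f \<in> borel_measurable borel" and fWV: "f ` W \<subseteq> V"
    and sq: "integrable \<mu> (\<lambda>x. (norm (f x))\<^sup>2)"
  shows "P2 V (distr \<mu> borel f)"
proof -
  note F = P2_facts[OF P2]
  have fmu: "f \<in> borel_measurable \<mu>" by (rule meas_cong[OF F(2) fm])
  have Vs: "V \<in> sets borel" using closed_subspace[OF sV] by (rule borel_closed)
  have ps: "prob_space (distr \<mu> borel f)" by (rule prob_space.prob_space_distr[OF F(1) fmu])
  have pre: "f -` V \<inter> space \<mu> \<in> sets \<mu>" by (rule measurable_sets[OF fmu Vs])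
  have "AE x in \<mu>. x \<in> f -` V \<inter> space \<mu>"
    using F(3) AE_space
  proof eventually_elim
    case (elim x)
    then have "f x \<in> V" using fWV by blast
    then show ?case using elim by blast
  qed
  then have "emeasure \<mu> (f -` V \<inter> space \<mu>) = 1"
    by (rule prob_space.emeasure_eq_1_AE[OF F(1) pre])
  then have e: "emeasure (distr \<mu> borel f) V = 1" by (simp add: emeasure_distr[OF fmu Vs])
  have nm: "(\<lambda>y::real^'n. (norm y)\<^sup>2) \<in> borel_measurable borel"
    by (intro borel_measurable_continuous_onI continuous_intros)
  have i: "integrable (distr \<mu> borel f) (\<lambda>y. (norm y)\<^sup>2)"
    using integrable_distr_eq[OF fmu nm] sq by simp
  show ?thesis unfolding P2_def using ps e i Vs by simp
qed

theorem corollary4p7: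
  fixes W V :: "(real^'n) set" and \<mu> :: "(real^'n) measure" and T :: "real^'n \<Rightarrow> real^'n"
  assumes "subspace W" and "subspace V"
    and "W + orthogonal_comp V = UNIV" and "W \<inter> orthogonal_comp V = {0}"
    and "prob_frame W \<mu>"
    and "T \<in> borel_measurable borel" and "T ` W \<subseteq> V"
  shows "oblique_dual W V \<mu> (distr \<mu> borel T) (distr \<mu> (borel \<Otimes>\<^sub>M borel) (\<lambda>x. (x, T x)))
    \<longleftrightarrow> (\<exists>h :: real^'n \<Rightarrow> real^'n. h \<in> borel_measurable borel \<and> h ` W \<subseteq> V \<and>
           P2 V (distr \<mu> borel h) \<and>
           (\<integral>x. outer x (h x) \<partial>\<mu>) = 0 \<and>
           (\<forall>x\<in>W. T x = (oblique_proj V (orthogonal_comp W) ** mp_pinv (frame_op \<mu>)) *v x + h x))"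
proof -
  note sW = assms(1) and sV = assms(2) and sum = assms(3) and int = assms(4) and pf = assms(5)
    and Tm = assms(6) and TWV = assms(7)
  have P2: "P2 W \<mu>" using pf unfolding prob_frame_def by blast
  note F = P2_facts[OF P2]
  define S where "S = frame_op \<mu>"
  define M where "M = oblique_proj V (orthogonal_comp W) ** mp_pinv S"
  define R where "R = oblique_proj W (orthogonal_comp V)"
  have sym: "transpose S = S" unfolding S_def by (rule frame_facts(4)[OF P2])
  have ker: "\<And>z. S *v z = 0 \<Longrightarrow> z \<in> orthogonal_comp W"
    unfolding S_def by (rule frame_ker(2)[OF sW pf])
  have coreeq: "S ** transpose M = R"
    unfolding M_def R_def by (rule core[OF sW sV sum int sym ker])
  have intM: "(\<integral>x. outer x (M *v x) \<partial>\<mu>) = R"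
    using frame_facts(3)[OF P2, of M] coreeq unfolding S_def by simp
  have MV: "M *v x \<in> V" for x
    unfolding M_def using oblique_main(3)[OF sW sV sum int] by (simp flip: matrix_vector_mul_assoc)
  have idm: "(\<lambda>x. x) \<in> borel_measurable \<mu>" using F(2) by simp
  have Tmu: "T \<in> borel_measurable \<mu>" by (rule meas_cong[OF F(2) Tm])
  have Mmu: "(\<lambda>x. M *v x) \<in> borel_measurable \<mu>" by (rule meas_cong[OF F(2) mulv_meas])
  have sqM: "integrable \<mu> (\<lambda>x. (norm (M *v x))\<^sup>2)" by (rule integrable_sq_lin[OF F(2) F(4)])
  have dint: "(\<integral>p. outer (fst p) (snd p) \<partial>(distr \<mu> (borel \<Otimes>\<^sub>M borel) (\<lambda>x. (x, T x))))
       = (\<integral>x. outer x (T x) \<partial>\<mu>)" by (rule distr_pair_int[OF F(2) Tm])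
  have nm: "(\<lambda>y::real^'n. (norm y)\<^sup>2) \<in> borel_measurable borel"
    by (intro borel_measurable_continuous_onI continuous_intros)
  have sq_of: "integrable \<mu> (\<lambda>x. (norm (f x))\<^sup>2)"
    if "P2 V (distr \<mu> borel f)" "f \<in> borel_measurable \<mu>" for f
  proof -
    have "integrable (distr \<mu> borel f) (\<lambda>y. (norm y)\<^sup>2)" using that(1) unfolding P2_def by blast
    then show ?thesis using integrable_distr_eq[OF that(2) nm] by simp
  qed
  show ?thesis
  proof
    assume od: "oblique_dual W V \<mu> (distr \<mu> borel T) (distr \<mu> (borel \<Otimes>\<^sub>M borel) (\<lambda>x. (x, T x)))"
    have P2T: "P2 V (distr \<mu> borel T)" using od unfolding oblique_dual_def by blast
    have intT: "(\<integral>x. outer x (T x) \<partial>\<mu>) = R"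
      using od dint unfolding oblique_dual_def R_def by simp
    have sqT: "integrable \<mu> (\<lambda>x. (norm (T x))\<^sup>2)" by (rule sq_of[OF P2T Tmu])
    define h where "h x = T x - M *v x" for x
    have hm: "h \<in> borel_measurable borel"
      unfolding h_def by (intro borel_measurable_diff Tm mulv_meas)
    have hWV: "h ` W \<subseteq> V"
    proof
      fix y assume "y \<in> h ` W"
      then obtain x where x: "x \<in> W" "y = h x" by blast
      have "T x \<in> V" using TWV x by blast
      then show "y \<in> V" using x MV subspace_diff[OF sV] unfolding h_def by blast
    qed
    have sqh: "integrable \<mu> (\<lambda>x. (norm (h x))\<^sup>2)"
      unfolding h_def by (rule integrable_sq_add(2)[OF Tmu Mmu sqT sqM])
    have P2h: "P2 V (distr \<mu> borel h)" by (rule P2_distr[OF P2 sV hm hWV sqh])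
    have iT: "integrable \<mu> (\<lambda>x. outer x (T x))" by (rule integrable_outer[OF idm Tmu F(4) sqT])
    have iM: "integrable \<mu> (\<lambda>x. outer x (M *v x))" by (rule integrable_outer[OF idm Mmu F(4) sqM])
    have "(\<integral>x. outer x (h x) \<partial>\<mu>) = (\<integral>x. outer x (T x) - outer x (M *v x) \<partial>\<mu>)"
      unfolding h_def outer_diff ..
    also have "\<dots> = 0" using iT iM intT intM by simp
    finally have h0: "(\<integral>x. outer x (h x) \<partial>\<mu>) = 0" .
    have "\<forall>x\<in>W. T x = M *v x + h x" unfolding h_def by simp
    then show "\<exists>h :: real^'n \<Rightarrow> real^'n. h \<in> borel_measurable borel \<and> h ` W \<subseteq> V \<and>
           P2 V (distr \<mu> borel h) \<and>
           (\<integral>x. outer x (h x) \<partial>\<mu>) = 0 \<and>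
           (\<forall>x\<in>W. T x = (oblique_proj V (orthogonal_comp W) ** mp_pinv (frame_op \<mu>)) *v x + h x)"
      using hm hWV P2h h0 unfolding M_def S_def by blast
  next
    assume "\<exists>h :: real^'n \<Rightarrow> real^'n. h \<in> borel_measurable borel \<and> h ` W \<subseteq> V \<and>
           P2 V (distr \<mu> borel h) \<and>
           (\<integral>x. outer x (h x) \<partial>\<mu>) = 0 \<and>
           (\<forall>x\<in>W. T x = (oblique_proj V (orthogonal_comp W) ** mp_pinv (frame_op \<mu>)) *v x + h x)"
    then obtain h where hm: "h \<in> borel_measurable borel" and P2h: "P2 V (distr \<mu> borel h)"
      and h0: "(\<integral>x. outer x (h x) \<partial>\<mu>) = 0" and Th: "\<forall>x\<in>W. T x = M *v x + h x"
      unfolding M_def S_def by blast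
    have hmu: "h \<in> borel_measurable \<mu>" by (rule meas_cong[OF F(2) hm])
    have sqh: "integrable \<mu> (\<lambda>x. (norm (h x))\<^sup>2)" by (rule sq_of[OF P2h hmu])
    have AEeq: "AE x in \<mu>. M *v x + h x = T x"
      using F(3) by eventually_elim (use Th in simp)
    have sqMh: "integrable \<mu> (\<lambda>x. (norm (M *v x + h x))\<^sup>2)"
      by (rule integrable_sq_add(1)[OF Mmu hmu sqM sqh])
    have sqT: "integrable \<mu> (\<lambda>x. (norm (T x))\<^sup>2)"
    proof (rule integrable_cong_AE_imp[OF sqMh])
      show "(\<lambda>x. (norm (T x))\<^sup>2) \<in> borel_measurable \<mu>"
        using Tmu by measurable
      show "AE x in \<mu>. (norm (M *v x + h x))\<^sup>2 = (norm (T x))\<^sup>2"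
        using AEeq by eventually_elim simp
    qed
    have P2T: "P2 V (distr \<mu> borel T)" by (rule P2_distr[OF P2 sV Tm TWV sqT])
    have pm: "(\<lambda>x. (x, T x)) \<in> measurable \<mu> (borel \<Otimes>\<^sub>M borel)"
      by (rule measurable_Pair[OF idm Tmu])
    have cpl: "coupling (distr \<mu> (borel \<Otimes>\<^sub>M borel) (\<lambda>x. (x, T x))) \<mu> (distr \<mu> borel T)"
      unfolding coupling_def
    proof (intro conjI)
      show "prob_space (distr \<mu> (borel \<Otimes>\<^sub>M borel) (\<lambda>x. (x, T x)))"
        by (rule prob_space.prob_space_distr[OF F(1) pm])
      show "sets (distr \<mu> (borel \<Otimes>\<^sub>M borel) (\<lambda>x. (x, T x))) = sets (borel \<Otimes>\<^sub>M borel)" by simp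
      have "distr (distr \<mu> (borel \<Otimes>\<^sub>M borel) (\<lambda>x. (x, T x))) borel fst = distr \<mu> borel (fst \<circ> (\<lambda>x. (x, T x)))"
        by (rule distr_distr[OF measurable_fst pm])
      also have "\<dots> = distr \<mu> borel (\<lambda>x. x)" by (simp add: comp_def)
      also have "\<dots> = \<mu>" by (rule distr_id2) (simp add: F(2))
      finally show "distr (distr \<mu> (borel \<Otimes>\<^sub>M borel) (\<lambda>x. (x, T x))) borel fst = \<mu>" .
      have "distr (distr \<mu> (borel \<Otimes>\<^sub>M borel) (\<lambda>x. (x, T x))) borel snd = distr \<mu> borel (snd \<circ> (\<lambda>x. (x, T x)))"
        by (rule distr_distr[OF measurable_snd pm])
      also have "snd \<circ> (\<lambda>x. (x, T x)) = T" by (simp add: comp_def)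
      finally show "distr (distr \<mu> (borel \<Otimes>\<^sub>M borel) (\<lambda>x. (x, T x))) borel snd = distr \<mu> borel T" .
    qed
    have iM: "integrable \<mu> (\<lambda>x. outer x (M *v x))" by (rule integrable_outer[OF idm Mmu F(4) sqM])
    have ih: "integrable \<mu> (\<lambda>x. outer x (h x))" by (rule integrable_outer[OF idm hmu F(4) sqh])
    have "(\<integral>x. outer x (T x) \<partial>\<mu>) = (\<integral>x. outer x (M *v x) + outer x (h x) \<partial>\<mu>)"
    proof (rule integral_cong_AE)
      show "(\<lambda>x. outer x (T x)) \<in> borel_measurable \<mu>" by (rule outer_meas[OF idm Tmu])
      show "(\<lambda>x. outer x (M *v x) + outer x (h x)) \<in> borel_measurable \<mu>"
        using outer_meas[OF idm Mmu] outer_meas[OF idm hmu] by (rule borel_measurable_add)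
      show "AE x in \<mu>. outer x (T x) = outer x (M *v x) + outer x (h x)"
        using AEeq by eventually_elim (metis outer_add)
    qed
    also have "\<dots> = R" using iM ih intM h0 by simp
    finally have "(\<integral>x. outer x (T x) \<partial>\<mu>) = R" .
    then show "oblique_dual W V \<mu> (distr \<mu> borel T) (distr \<mu> (borel \<Otimes>\<^sub>M borel) (\<lambda>x. (x, T x)))"
      unfolding oblique_dual_def using P2T cpl dint R_def by simp
  qed
qed

end
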